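(* Let $\mu$ be a differentiable growth rate and $\gamma_1,\gamma_2\in\rho^{ND}_\mu(A)$ with $\gamma_1<\gamma_2$. The following are equivalent: (a) $\mathcal U_{\gamma_2}\cap\mathcal V_{\gamma_1}\ne\mathbb R\times\{0\}$; (b) $[\gamma_1,\gamma_2]\cap\Sigma^{ND}_\mu(A)\ne\emptyset$; (c) $\operatorname{rank}\mathcal U_{\gamma_1}<\operatorname{rank}\mathcal U_{\gamma_2}$; (d) $\operatorname{rank}\mathcal V_{\gamma_1}>\operatorname{rank}\mathcal V_{\gamma_2}$.
   Context: Fix $n\ge1$ and a norm on $\mathbb R^n$. Let $A:\mathbb R\to M_n(\mathbb R)$ be continuous with evolution operator $\Phi(t,s)$. $\operatorname{sign}(s)\in\{-1,0,1\}$. A growth rate is a strictly increasing $\mu:\mathbb R\to(0,\infty)$, $\mu(0)=1$, $\mu\to+\infty$ at $+\infty$, $\mu\to0$ at $-\infty$; differentiable if it is differentiable. A linear system $x'=C(t)x$ with evolution operator $\Psi$ admits a nonuniform $\mu$-dichotomy (N$\mu$D) if there are projections $P(t)$ with $P(t)\Psi(t,s)=\Psi(t,s)P(s)$ and constants $K\ge1$, $\alpha<0$, $\beta>0$, $\theta,\nu\ge0$, $\alpha+\theta<0$, $\beta-\nu>0$ with ($Q=I-P$) $\|\Psi(t,s)P(s)\|\le K(\mu(t)/\mu(s))^{\alpha}\mu(s)^{\operatorname{sign}(s)\theta}$ for $t\ge s$ and $\|\Psi(t,s)Q(s)\|\le K(\mu(t)/\mu(s))^{\beta}\mu(s)^{\operatorname{sign}(s)\nu}$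 for $t\le s$. $\Sigma^{ND}_\mu(A)=\{\gamma: x'=(A(t)-\gamma\frac{\mu'(t)}{\mu(t)}I)x\text{ admits no N}\mu\text{D}\}$, $\rho^{ND}_\mu(A)=\mathbb R\setminus\Sigma^{ND}_\mu(A)$. $\mathcal U_\gamma=\{(s,\xi):\sup_{t\ge0}\|\Phi(t,s)\xi\|\mu(t)^{-\gamma}<\infty\}$, $\mathcal V_\gamma=\{(s,\xi):\sup_{t\le0}\|\Phi(t,s)\xi\|\mu(t)^{-\gamma}<\infty\}$. These are linear integral manifolds: their fibers $\mathcal W(s)=\{\xi:(s,\xi)\in\mathcal W\}$ are linear subspaces of $\mathbb R^n$ of a dimension independent of $s$, called the rank. Intersection is fiberwise. *)

theory Defs
  imports "HOL-Analysis.Analysis"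
begin

definition growth_rate :: "(real \<Rightarrow> real) \<Rightarrow> bool" where
  "growth_rate \<mu> \<longleftrightarrow> strict_mono \<mu> \<and> (\<forall>t. 0 < \<mu> t) \<and> \<mu> 0 = 1
     \<and> filterlim \<mu> at_top at_top \<and> (\<mu> \<longlongrightarrow> 0) at_bot"

definition diff_growth_rate :: "(real \<Rightarrow> real) \<Rightarrow> bool" where
  "diff_growth_rate \<mu> \<longleftrightarrow> growth_rate \<mu> \<and> (\<forall>t. \<mu> differentiable (at t))"

definition evol_op :: "(real \<Rightarrow> real^'n^'n) \<Rightarrow> (real \<Rightarrow> real \<Rightarrow> real^'n^'n) \<Rightarrow> bool" where
  "evol_op C \<Psi> \<longleftrightarrow> (\<forall>s. \<Psi> s s = mat 1 \<and>
      (\<forall>t. ((\<lambda>t. \<Psi> t s) has_vector_derivative (C t ** \<Psi> t s)) (at t)))"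

definition mnorm :: "real^'n^'n \<Rightarrow> real" where
  "mnorm M = onorm (\<lambda>x. M *v x)"

definition NmuD :: "(real \<Rightarrow> real) \<Rightarrow> (real \<Rightarrow> real^'n^'n) \<Rightarrow> bool" where
  "NmuD \<mu> C \<longleftrightarrow> (\<exists>\<Psi>. evol_op C \<Psi> \<and>
     (\<exists>P K \<alpha> \<beta> \<theta> \<nu>. (\<forall>t. P t ** P t = P t) \<and> (\<forall>t s. P t ** \<Psi> t s = \<Psi> t s ** P s)
       \<and> K \<ge> 1 \<and> \<alpha> < 0 \<and> \<beta> > 0 \<and> \<theta> \<ge> 0 \<and> \<nu> \<ge> 0 \<and> \<alpha> + \<theta> < 0 \<and> \<beta> - \<nu> > 0
       \<and> (\<forall>t s. t \<ge> s \<longrightarrow> mnorm (\<Psi> t s ** P s)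
              \<le> K * (\<mu> t / \<mu> s) powr \<alpha> * \<mu> s powr (sgn s * \<theta>))
       \<and> (\<forall>t s. t \<le> s \<longrightarrow> mnorm (\<Psi> t s ** (mat 1 - P s))
              \<le> K * (\<mu> t / \<mu> s) powr \<beta> * \<mu> s powr (sgn s * \<nu>))))"

definition SigmaND :: "(real \<Rightarrow> real) \<Rightarrow> (real \<Rightarrow> real^'n^'n) \<Rightarrow> real set" where
  "SigmaND \<mu> A = {\<gamma>. \<not> NmuD \<mu> (\<lambda>t. A t - (\<gamma> * deriv \<mu> t / \<mu> t) *\<^sub>R mat 1)}"

definition rhoND :: "(real \<Rightarrow> real) \<Rightarrow> (real \<Rightarrow> real^'n^'n) \<Rightarrow> real set" where
  "rhoND \<mu> A = UNIV - SigmaND \<mu> A"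

definition Uset :: "(real \<Rightarrow> real) \<Rightarrow> (real \<Rightarrow> real \<Rightarrow> real^'n^'n) \<Rightarrow> real \<Rightarrow> (real \<times> (real^'n)) set" where
  "Uset \<mu> \<Phi> \<gamma> = {(s, \<xi>). bdd_above ((\<lambda>t. norm (\<Phi> t s *v \<xi>) * \<mu> t powr (- \<gamma>)) ` {0..})}"

definition Vset :: "(real \<Rightarrow> real) \<Rightarrow> (real \<Rightarrow> real \<Rightarrow> real^'n^'n) \<Rightarrow> real \<Rightarrow> (real \<times> (real^'n)) set" where
  "Vset \<mu> \<Phi> \<gamma> = {(s, \<xi>). bdd_above ((\<lambda>t. norm (\<Phi> t s *v \<xi>) * \<mu> t powr (- \<gamma>)) ` {..0})}"

text \<open>Rank of a linear integral manifold: the dimension of its fiber (independent of s; taken at s = 0).\<close>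
definition rank_im :: "(real \<times> (real^'n)) set \<Rightarrow> nat" where
  "rank_im W = dim {\<xi>. (0, \<xi>) \<in> W}"

end

theory Submission
  imports Defs
begin


lemma matrix_add_rdistrib': "((A::real^'n^'n) + B) ** C = A ** C + B ** C"
  by (vector matrix_matrix_mult_def sum.distrib[symmetric] field_simps)

lemma bb_mm: "bounded_bilinear (\<lambda>(A::real^'n^'n) (B::real^'n^'n). A ** B)"
proof -
  have "bilinear (\<lambda>(A::real^'n^'n) (B::real^'n^'n). A ** B)"
    unfolding bilinear_def
    by (auto intro!: linearI simp: matrix_add_ldistrib matrix_add_rdistrib' scalar_matrix_assoc matrix_scalar_ac)
  then show ?thesis using bilinear_conv_bounded_bilinear by blast
qed

lemma ode_unique:
  fixes A :: "real \<Rightarrow> real^'n^'n" and X :: "real \<Rightarrow> real^'n^'n"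
  assumes Ac: "continuous_on UNIV A"
    and d: "\<And>t. (X has_vector_derivative (A t ** X t)) (at t)"
    and X0: "X s = 0"
  shows "X t = 0"
proof -
  define I where "I = {min s t .. max s t}"
  have "compact (A ` I)" unfolding I_def
    by (rule compact_continuous_image) (auto intro: continuous_on_subset[OF Ac])
  then obtain L where L: "\<And>r. r \<in> I \<Longrightarrow> norm (A r) \<le> L"
    using compact_imp_bounded bounded_iff by (metis imageI)
  obtain K0 where K0: "\<And>(a::real^'n^'n) (b::real^'n^'n). norm (a ** b) \<le> norm a * norm b * K0"
    using bounded_bilinear.bounded[OF bb_mm] by metis
  define c where "c = 2 * max L 0 * max K0 0"
  have c0: "c \<ge> 0" unfolding c_def by auto
  define f where "f r = X r \<bullet> X r" for r
  have fd: "(f has_real_derivative 2 * (X r \<bullet> (A r ** X r))) (at r)" for r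
  proof -
    have "((\<lambda>r. X r \<bullet> X r) has_vector_derivative (X r \<bullet> (A r ** X r) + (A r ** X r) \<bullet> X r)) (at r)"
      by (rule bounded_bilinear.has_vector_derivative[OF bounded_bilinear_inner d d])
    then show ?thesis unfolding f_def has_real_derivative_iff_has_vector_derivative
      by (simp add: inner_commute)
  qed
  have fb: "\<bar>2 * (X r \<bullet> (A r ** X r))\<bar> \<le> c * f r" if "r \<in> I" for r
  proof -
    have "\<bar>X r \<bullet> (A r ** X r)\<bar> \<le> norm (X r) * norm (A r ** X r)"
      by (rule Cauchy_Schwarz_ineq2)
    also have "\<dots> \<le> norm (X r) * (norm (A r) * norm (X r) * max K0 0)"
      apply (rule mult_left_mono) using K0[of "A r" "X r"]
      apply (smt (verit) mult_left_mono mult_nonneg_nonneg norm_ge_zero) by simp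
    also have "\<dots> \<le> norm (X r) * (max L 0 * norm (X r) * max K0 0)"
      apply (rule mult_left_mono) apply (rule mult_right_mono) apply (rule mult_right_mono)
      using L[OF that] by auto
    also have "\<dots> = max L 0 * max K0 0 * f r"
      unfolding f_def by (simp add: power2_norm_eq_inner[symmetric] power2_eq_square algebra_simps)
    finally show ?thesis unfolding c_def by simp
  qed
  have fnn: "f r \<ge> 0" for r unfolding f_def by simp
  have "f t = 0"
  proof (cases "s \<le> t")
    case True
    define g where "g r = f r * exp (- c * r)" for r
    have "g t \<le> g s"
    proof (rule DERIV_nonpos_imp_nonincreasing[OF True])
      fix x assume x: "s \<le> x" "x \<le> t"
      then have xI: "x \<in> I" unfolding I_def by auto
      have "(g has_real_derivative (2 * (X x \<bullet> (A x ** X x)) * exp (- c * x) + f x * (exp (- c * x) * (- c)))) (at x)"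
        unfolding g_def by (auto intro!: derivative_eq_intros fd)
      moreover have "2 * (X x \<bullet> (A x ** X x)) * exp (- c * x) + f x * (exp (- c * x) * (- c)) \<le> 0"
      proof -
        have "2 * (X x \<bullet> (A x ** X x)) \<le> c * f x" using fb[OF xI] by linarith
        then have "2 * (X x \<bullet> (A x ** X x)) * exp (- c * x) \<le> c * f x * exp (- c * x)"
          by (rule mult_right_mono) simp
        then show ?thesis by (simp add: algebra_simps)
      qed
      ultimately show "\<exists>y. (g has_real_derivative y) (at x) \<and> y \<le> 0" by blast
    qed
    then have "g t \<le> 0" using X0 unfolding g_def f_def by simp
    moreover have "g t \<ge> 0" unfolding g_def using fnn by simp
    ultimately show ?thesis unfolding g_def by simp
  next
    case False
    then have ts: "t \<le> s" by simp
    define g where "g r = f r * exp (c * r)" for r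
    have "g t \<le> g s"
    proof (rule DERIV_nonneg_imp_nondecreasing[OF ts])
      fix x assume x: "t \<le> x" "x \<le> s"
      then have xI: "x \<in> I" unfolding I_def by auto
      have "(g has_real_derivative (2 * (X x \<bullet> (A x ** X x)) * exp (c * x) + f x * (exp (c * x) * c))) (at x)"
        unfolding g_def by (auto intro!: derivative_eq_intros fd)
      moreover have "2 * (X x \<bullet> (A x ** X x)) * exp (c * x) + f x * (exp (c * x) * c) \<ge> 0"
      proof -
        have "- (c * f x) \<le> 2 * (X x \<bullet> (A x ** X x))" using fb[OF xI] by linarith
        then have "- (c * f x) * exp (c * x) \<le> 2 * (X x \<bullet> (A x ** X x)) * exp (c * x)"
          by (rule mult_right_mono) simp
        then show ?thesis by (simp add: algebra_simps)
      qed
      ultimately show "\<exists>y. (g has_real_derivative y) (at x) \<and> y \<ge> 0" by blast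
    qed
    then have "g t \<le> 0" using X0 unfolding g_def f_def by simp
    moreover have "g t \<ge> 0" unfolding g_def using fnn by simp
    ultimately show ?thesis unfolding g_def by simp
  qed
  then show ?thesis unfolding f_def by simp
qed



lemma matrix_diff_rdistrib': "((A::real^'n^'n) - B) ** C = A ** C - B ** C"
  by (vector matrix_matrix_mult_def sum_subtractf[symmetric] field_simps)

lemma matrix_diff_ldistrib': "(C::real^'n^'n) ** (A - B) = C ** A - C ** B"
  by (vector matrix_matrix_mult_def sum_subtractf[symmetric] field_simps)

lemma scaleR_mat1_mult: "(k *\<^sub>R mat 1) ** (M::real^'n^'n) = k *\<^sub>R M"
  by (metis matrix_mul_lid scalar_matrix_assoc)

lemma sc_l: "(k *\<^sub>R (A::real^'n^'n)) ** B = k *\<^sub>R (A ** B)"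
  by (simp add: scalar_matrix_assoc)

lemma sc_r: "(A::real^'n^'n) ** (k *\<^sub>R B) = k *\<^sub>R (A ** B)"
  by (simp add: scalar_matrix_assoc matrix_scalar_ac)

lemma gr_pos: "growth_rate \<mu> \<Longrightarrow> 0 < \<mu> t"
  unfolding growth_rate_def by auto

lemma gr_mono: "growth_rate \<mu> \<Longrightarrow> s \<le> t \<Longrightarrow> \<mu> s \<le> \<mu> t"
  unfolding growth_rate_def by (meson order_le_less strict_mono_less_eq)

lemma gr_0: "growth_rate \<mu> \<Longrightarrow> \<mu> 0 = 1"
  unfolding growth_rate_def by auto

lemma gr_ge1: "growth_rate \<mu> \<Longrightarrow> 0 \<le> t \<Longrightarrow> 1 \<le> \<mu> t"
  using gr_mono gr_0 by metis

lemma gr_le1: "growth_rate \<mu> \<Longrightarrow> t \<le> 0 \<Longrightarrow> \<mu> t \<le> 1"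
  using gr_mono gr_0 by metis

lemma ratio_powr_deriv:
  assumes pos: "\<And>t. 0 < \<mu> t" and d: "(\<mu> has_real_derivative d) (at t)"
  shows "((\<lambda>t. (\<mu> t / \<mu> s) powr a) has_real_derivative ((\<mu> t / \<mu> s) powr a * (a * d / \<mu> t))) (at t)"
proof -
  have eq: "(\<lambda>t. (\<mu> t / \<mu> s) powr a) = (\<lambda>t. exp (a * (ln (\<mu> t) - ln (\<mu> s))))"
  proof (rule ext)
    fix x show "(\<mu> x / \<mu> s) powr a = exp (a * (ln (\<mu> x) - ln (\<mu> s)))"
      using pos[of x] pos[of s] by (simp add: powr_def ln_div)
  qed
  have "((\<lambda>t. exp (a * (ln (\<mu> t) - ln (\<mu> s)))) has_real_derivative
      exp (a * (ln (\<mu> t) - ln (\<mu> s))) * (a * (d / \<mu> t))) (at t)"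
    using pos[of t] by (auto intro!: derivative_eq_intros d)
  then show ?thesis unfolding eq using pos[of t] pos[of s] by (simp add: powr_def ln_div)
qed

definition Psig :: "(real \<Rightarrow> real) \<Rightarrow> (real \<Rightarrow> real \<Rightarrow> real^'n^'n) \<Rightarrow> real \<Rightarrow> real \<Rightarrow> real \<Rightarrow> real^'n^'n" where
  "Psig \<mu> \<Phi> \<gamma> t s = (\<mu> t / \<mu> s) powr (- \<gamma>) *\<^sub>R \<Phi> t s"

lemma cocycle:
  fixes A :: "real \<Rightarrow> real^'n^'n"
  assumes Ac: "continuous_on UNIV A" and ev: "evol_op A \<Phi>"
  shows "\<Phi> t r ** \<Phi> r s = \<Phi> t s"
proof -
  define X where "X t = \<Phi> t r ** \<Phi> r s - \<Phi> t s" for t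
  have d: "(X has_vector_derivative (A t ** X t)) (at t)" for t
  proof -
    have d1: "((\<lambda>t. \<Phi> t q) has_vector_derivative (A t ** \<Phi> t q)) (at t)" for q
      using ev unfolding evol_op_def by auto
    have "((\<lambda>t. \<Phi> t r ** \<Phi> r s) has_vector_derivative (\<Phi> t r ** 0 + (A t ** \<Phi> t r) ** \<Phi> r s)) (at t)"
      by (rule bounded_bilinear.has_vector_derivative[OF bb_mm d1 has_vector_derivative_const])
    then have "(X has_vector_derivative ((\<Phi> t r ** 0 + (A t ** \<Phi> t r) ** \<Phi> r s) - A t ** \<Phi> t s)) (at t)"
      unfolding X_def by (intro has_vector_derivative_diff d1)
    then show ?thesis unfolding X_def by (simp add: matrix_diff_ldistrib' matrix_mul_assoc)
  qed
  have "X r = 0" unfolding X_def using ev unfolding evol_op_def by simp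
  then have "X t = 0" by (rule ode_unique[OF Ac d])
  then show ?thesis unfolding X_def by simp
qed

lemma Psig_evol:
  fixes A :: "real \<Rightarrow> real^'n^'n"
  assumes ev: "evol_op A \<Phi>" and mu: "diff_growth_rate \<mu>"
  shows "evol_op (\<lambda>t. A t - (\<gamma> * deriv \<mu> t / \<mu> t) *\<^sub>R mat 1) (Psig \<mu> \<Phi> \<gamma>)"
  unfolding evol_op_def
proof (intro allI conjI)
  have gr: "growth_rate \<mu>" using mu unfolding diff_growth_rate_def by auto
  fix s t
  show "Psig \<mu> \<Phi> \<gamma> s s = mat 1" using ev gr_pos[OF gr, of s] unfolding evol_op_def Psig_def by simp
  have dm: "(\<mu> has_real_derivative deriv \<mu> t) (at t)"
    using mu unfolding diff_growth_rate_def by (simp add: DERIV_deriv_iff_real_differentiable)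
  have d1: "((\<lambda>t. \<Phi> t s) has_vector_derivative (A t ** \<Phi> t s)) (at t)"
    using ev unfolding evol_op_def by auto
  have "((\<lambda>t. Psig \<mu> \<Phi> \<gamma> t s) has_vector_derivative
      ((\<mu> t / \<mu> s) powr (-\<gamma>) *\<^sub>R (A t ** \<Phi> t s) + ((\<mu> t / \<mu> s) powr (-\<gamma>) * (-\<gamma> * deriv \<mu> t / \<mu> t)) *\<^sub>R \<Phi> t s)) (at t)"
    unfolding Psig_def
    by (rule has_vector_derivative_scaleR[OF ratio_powr_deriv[OF gr_pos[OF gr] dm] d1])
  moreover have "(\<mu> t / \<mu> s) powr (-\<gamma>) *\<^sub>R (A t ** \<Phi> t s) + ((\<mu> t / \<mu> s) powr (-\<gamma>) * (-\<gamma> * deriv \<mu> t / \<mu> t)) *\<^sub>R \<Phi> t s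
     = (A t - (\<gamma> * deriv \<mu> t / \<mu> t) *\<^sub>R mat 1) ** Psig \<mu> \<Phi> \<gamma> t s"
    unfolding Psig_def matrix_diff_rdistrib' scaleR_mat1_mult sc_l sc_r
    by (simp add: algebra_simps)
  ultimately show "((\<lambda>t. Psig \<mu> \<Phi> \<gamma> t s) has_vector_derivative
      ((A t - (\<gamma> * deriv \<mu> t / \<mu> t) *\<^sub>R mat 1) ** Psig \<mu> \<Phi> \<gamma> t s)) (at t)" by simp
qed

lemma Psig_unique:
  fixes A :: "real \<Rightarrow> real^'n^'n"
  assumes Ac: "continuous_on UNIV A" and ev: "evol_op A \<Phi>" and mu: "diff_growth_rate \<mu>"
    and ev2: "evol_op (\<lambda>t. A t - (\<gamma> * deriv \<mu> t / \<mu> t) *\<^sub>R mat 1) \<Psi>"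
  shows "\<Psi> = Psig \<mu> \<Phi> \<gamma>"
proof (intro ext)
  have gr: "growth_rate \<mu>" using mu unfolding diff_growth_rate_def by auto
  fix t s
  define C where "C t = A t - (\<gamma> * deriv \<mu> t / \<mu> t) *\<^sub>R mat 1" for t
  define D where "D t = \<Psi> t s - Psig \<mu> \<Phi> \<gamma> t s" for t
  define X where "X t = (\<mu> t / \<mu> s) powr \<gamma> *\<^sub>R D t" for t
  have dD: "(D has_vector_derivative (C t ** D t)) (at t)" for t
  proof -
    have "((\<lambda>t. \<Psi> t s) has_vector_derivative (C t ** \<Psi> t s)) (at t)"
      using ev2 unfolding evol_op_def C_def by auto
    moreover have "((\<lambda>t. Psig \<mu> \<Phi> \<gamma> t s) has_vector_derivative (C t ** Psig \<mu> \<Phi> \<gamma> t s)) (at t)"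
      using Psig_evol[OF ev mu, of \<gamma>] unfolding evol_op_def C_def by auto
    ultimately show ?thesis unfolding D_def matrix_diff_ldistrib'
      by (rule has_vector_derivative_diff)
  qed
  have dX: "(X has_vector_derivative (A t ** X t)) (at t)" for t
  proof -
    have dm: "(\<mu> has_real_derivative deriv \<mu> t) (at t)"
      using mu unfolding diff_growth_rate_def by (simp add: DERIV_deriv_iff_real_differentiable)
    have "(X has_vector_derivative ((\<mu> t / \<mu> s) powr \<gamma> *\<^sub>R (C t ** D t) + ((\<mu> t / \<mu> s) powr \<gamma> * (\<gamma> * deriv \<mu> t / \<mu> t)) *\<^sub>R D t)) (at t)"
      unfolding X_def by (rule has_vector_derivative_scaleR[OF ratio_powr_deriv[OF gr_pos[OF gr] dm] dD])
    moreover have "(\<mu> t / \<mu> s) powr \<gamma> *\<^sub>R (C t ** D t) + ((\<mu> t / \<mu> s) powr \<gamma> * (\<gamma> * deriv \<mu> t / \<mu> t)) *\<^sub>R D t = A t ** X t"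
      unfolding X_def C_def matrix_diff_rdistrib' scaleR_mat1_mult sc_l sc_r
      by (simp add: algebra_simps)
    ultimately show ?thesis by simp
  qed
  have "X s = 0" unfolding X_def D_def using ev2 Psig_evol[OF ev mu, of \<gamma>] unfolding evol_op_def by simp
  then have "X t = 0" by (rule ode_unique[OF Ac dX])
  moreover have "(\<mu> t / \<mu> s) powr \<gamma> \<noteq> 0" using gr_pos[OF gr, of t] gr_pos[OF gr, of s] by simp
  ultimately have "D t = 0" unfolding X_def by simp
  then show "\<Psi> t s = Psig \<mu> \<Phi> \<gamma> t s" unfolding D_def by simp
qed



definition Pbd :: "(real \<Rightarrow> real) \<Rightarrow> (real \<Rightarrow> real \<Rightarrow> real^'n^'n) \<Rightarrow> real \<Rightarrow> (real \<Rightarrow> real^'n^'n) \<Rightarrow> real \<Rightarrow> real \<Rightarrow> real \<Rightarrow> bool" where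
  "Pbd \<mu> \<Phi> \<gamma> P K \<alpha> \<theta> \<longleftrightarrow> (\<forall>t s. t \<ge> s \<longrightarrow> mnorm (Psig \<mu> \<Phi> \<gamma> t s ** P s)
              \<le> K * (\<mu> t / \<mu> s) powr \<alpha> * \<mu> s powr (sgn s * \<theta>))"

definition Qbd :: "(real \<Rightarrow> real) \<Rightarrow> (real \<Rightarrow> real \<Rightarrow> real^'n^'n) \<Rightarrow> real \<Rightarrow> (real \<Rightarrow> real^'n^'n) \<Rightarrow> real \<Rightarrow> real \<Rightarrow> real \<Rightarrow> bool" where
  "Qbd \<mu> \<Phi> \<gamma> P K \<beta> \<nu> \<longleftrightarrow> (\<forall>t s. t \<le> s \<longrightarrow> mnorm (Psig \<mu> \<Phi> \<gamma> t s ** (mat 1 - P s))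
              \<le> K * (\<mu> t / \<mu> s) powr \<beta> * \<mu> s powr (sgn s * \<nu>))"

definition Dich where
  "Dich \<mu> \<Phi> \<gamma> P K \<alpha> \<beta> \<theta> \<nu> \<longleftrightarrow> (\<forall>t. P t ** P t = P t) \<and> (\<forall>t s. P t ** \<Phi> t s = \<Phi> t s ** P s)
       \<and> K \<ge> 1 \<and> \<alpha> < 0 \<and> \<beta> > 0 \<and> \<theta> \<ge> 0 \<and> \<nu> \<ge> 0 \<and> \<alpha> + \<theta> < 0 \<and> \<beta> - \<nu> > 0
       \<and> Pbd \<mu> \<Phi> \<gamma> P K \<alpha> \<theta> \<and> Qbd \<mu> \<Phi> \<gamma> P K \<beta> \<nu>"

lemma comm_Psig:
  assumes gr: "growth_rate \<mu>"
  shows "(Pt ** Psig \<mu> \<Phi> \<gamma> t s = Psig \<mu> \<Phi> \<gamma> t s ** Ps) \<longleftrightarrow> (Pt ** \<Phi> t s = \<Phi> t s ** (Ps :: real^'n^'n))"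
proof -
  have "(\<mu> t / \<mu> s) powr (-\<gamma>) \<noteq> 0" using gr_pos[OF gr, of t] gr_pos[OF gr, of s] by simp
  then show ?thesis unfolding Psig_def sc_l sc_r by simp
qed

lemma NmuD_iff:
  fixes A :: "real \<Rightarrow> real^'n^'n"
  assumes Ac: "continuous_on UNIV A" and ev: "evol_op A \<Phi>" and mu: "diff_growth_rate \<mu>"
  shows "NmuD \<mu> (\<lambda>t. A t - (\<gamma> * deriv \<mu> t / \<mu> t) *\<^sub>R mat 1)
     \<longleftrightarrow> (\<exists>P K \<alpha> \<beta> \<theta> \<nu>. Dich \<mu> \<Phi> \<gamma> P K \<alpha> \<beta> \<theta> \<nu>)"
proof -
  have gr: "growth_rate \<mu>" using mu unfolding diff_growth_rate_def by auto
  have u: "evol_op (\<lambda>t. A t - (\<gamma> * deriv \<mu> t / \<mu> t) *\<^sub>R mat 1) \<Psi> \<longleftrightarrow> \<Psi> = Psig \<mu> \<Phi> \<gamma>" for \<Psi>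
    using Psig_unique[OF Ac ev mu] Psig_evol[OF ev mu] by blast
  show ?thesis unfolding NmuD_def u Dich_def Pbd_def Qbd_def
    by (simp add: comm_Psig[OF gr])
qed

lemma mnorm_mv: "norm ((M::real^'n^'n) *v x) \<le> mnorm M * norm x"
  unfolding mnorm_def by (rule onorm[OF matrix_vector_mul_bounded_linear])

lemma mnorm_scale: "mnorm (c *\<^sub>R (M::real^'n^'n)) = \<bar>c\<bar> * mnorm M"
proof -
  have "(\<lambda>x. (c *\<^sub>R M) *v x) = (\<lambda>x. c *\<^sub>R (M *v x))"
    by (simp add: scaleR_matrix_vector_assoc)
  then show ?thesis unfolding mnorm_def
    using onorm_scaleR[OF matrix_vector_mul_bounded_linear[of M]] by simp
qed

lemma Psig_shift:
  assumes gr: "growth_rate \<mu>"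
  shows "Psig \<mu> \<Phi> \<gamma>' t s = (\<mu> t / \<mu> s) powr (\<gamma> - \<gamma>') *\<^sub>R Psig \<mu> \<Phi> \<gamma> t s"
  unfolding Psig_def by (simp add: powr_add[symmetric])

lemma Pbd_shift:
  assumes gr: "growth_rate \<mu>" and P: "Pbd \<mu> \<Phi> \<gamma> P K \<alpha> \<theta>"
  shows "Pbd \<mu> \<Phi> \<gamma>' P K (\<alpha> + \<gamma> - \<gamma>') \<theta>"
  unfolding Pbd_def
proof (intro allI impI)
  fix t s :: real assume ts: "s \<le> t"
  define r where "r = \<mu> t / \<mu> s"
  have r: "r > 0" unfolding r_def using gr_pos[OF gr, of t] gr_pos[OF gr, of s] by simp
  have "mnorm (Psig \<mu> \<Phi> \<gamma>' t s ** P s) = r powr (\<gamma> - \<gamma>') * mnorm (Psig \<mu> \<Phi> \<gamma> t s ** P s)"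
    unfolding Psig_shift[OF gr, of \<Phi> \<gamma>' t s \<gamma>] sc_l mnorm_scale r_def[symmetric] using r by simp
  also have "\<dots> \<le> r powr (\<gamma> - \<gamma>') * (K * r powr \<alpha> * \<mu> s powr (sgn s * \<theta>))"
    using P ts unfolding Pbd_def r_def by (intro mult_left_mono) auto
  also have "\<dots> = K * r powr (\<alpha> + \<gamma> - \<gamma>') * \<mu> s powr (sgn s * \<theta>)"
    by (simp add: powr_add[symmetric] add_diff_eq add_ac)
  finally show "mnorm (Psig \<mu> \<Phi> \<gamma>' t s ** P s) \<le> K * (\<mu> t / \<mu> s) powr (\<alpha> + \<gamma> - \<gamma>') * \<mu> s powr (sgn s * \<theta>)"
    unfolding r_def .
qed

lemma Qbd_shift:
  assumes gr: "growth_rate \<mu>" and P: "Qbd \<mu> \<Phi> \<gamma> P K \<beta> \<nu>"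
  shows "Qbd \<mu> \<Phi> \<gamma>' P K (\<beta> + \<gamma> - \<gamma>') \<nu>"
  unfolding Qbd_def
proof (intro allI impI)
  fix t s :: real assume ts: "t \<le> s"
  define r where "r = \<mu> t / \<mu> s"
  have r: "r > 0" unfolding r_def using gr_pos[OF gr, of t] gr_pos[OF gr, of s] by simp
  have "mnorm (Psig \<mu> \<Phi> \<gamma>' t s ** (mat 1 - P s)) = r powr (\<gamma> - \<gamma>') * mnorm (Psig \<mu> \<Phi> \<gamma> t s ** (mat 1 - P s))"
    unfolding Psig_shift[OF gr, of \<Phi> \<gamma>' t s \<gamma>] sc_l mnorm_scale r_def[symmetric] using r by simp
  also have "\<dots> \<le> r powr (\<gamma> - \<gamma>') * (K * r powr \<beta> * \<mu> s powr (sgn s * \<nu>))"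
    using P ts unfolding Qbd_def r_def by (intro mult_left_mono) auto
  also have "\<dots> = K * r powr (\<beta> + \<gamma> - \<gamma>') * \<mu> s powr (sgn s * \<nu>)"
    by (simp add: powr_add[symmetric] add_diff_eq add_ac)
  finally show "mnorm (Psig \<mu> \<Phi> \<gamma>' t s ** (mat 1 - P s)) \<le> K * (\<mu> t / \<mu> s) powr (\<beta> + \<gamma> - \<gamma>') * \<mu> s powr (sgn s * \<nu>)"
    unfolding r_def .
qed

lemma Pbd_mono: "Pbd \<mu> \<Phi> \<gamma> P K \<alpha> \<theta> \<Longrightarrow> K \<le> K' \<Longrightarrow> Pbd \<mu> \<Phi> \<gamma> P K' \<alpha> \<theta>"
  unfolding Pbd_def by (smt (verit, ccfv_threshold) mult_right_mono powr_ge_zero mult_nonneg_nonneg)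

lemma Qbd_mono: "Qbd \<mu> \<Phi> \<gamma> P K \<beta> \<nu> \<Longrightarrow> K \<le> K' \<Longrightarrow> Qbd \<mu> \<Phi> \<gamma> P K' \<beta> \<nu>"
  unfolding Qbd_def by (smt (verit, ccfv_threshold) mult_right_mono powr_ge_zero mult_nonneg_nonneg)



definition UF :: "(real \<Rightarrow> real) \<Rightarrow> (real \<Rightarrow> real \<Rightarrow> real^'n^'n) \<Rightarrow> real \<Rightarrow> (real^'n) set" where
  "UF \<mu> \<Phi> \<gamma> = {\<xi>. (0, \<xi>) \<in> Uset \<mu> \<Phi> \<gamma>}"
definition VF :: "(real \<Rightarrow> real) \<Rightarrow> (real \<Rightarrow> real \<Rightarrow> real^'n^'n) \<Rightarrow> real \<Rightarrow> (real^'n) set" where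
  "VF \<mu> \<Phi> \<gamma> = {\<xi>. (0, \<xi>) \<in> Vset \<mu> \<Phi> \<gamma>}"

lemma mnorm_nn: "0 \<le> mnorm (M::real^'n^'n)"
  unfolding mnorm_def by (rule onorm_pos_le[OF matrix_vector_mul_bounded_linear])

lemma comm_vec: "Pt ** M = M ** Ps \<Longrightarrow> Pt *v (M *v v) = M *v (Ps *v (v::real^'n))"
  for Pt M Ps :: "real^'n^'n" by (metis matrix_vector_mul_assoc)

lemma Psig_norm:
  assumes gr: "growth_rate \<mu>"
  shows "norm (Psig \<mu> \<Phi> \<gamma> t 0 *v \<xi>) = norm (\<Phi> t 0 *v \<xi>) * \<mu> t powr (- \<gamma>)"
proof -
  have "Psig \<mu> \<Phi> \<gamma> t 0 *v \<xi> = \<mu> t powr (- \<gamma>) *\<^sub>R (\<Phi> t 0 *v \<xi>)"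
    unfolding Psig_def gr_0[OF gr] by (simp add: scaleR_matrix_vector_assoc)
  then show ?thesis by simp
qed

lemma Psig_inv:
  fixes A :: "real \<Rightarrow> real^'n^'n"
  assumes Ac: "continuous_on UNIV A" and ev: "evol_op A \<Phi>" and gr: "growth_rate \<mu>"
  shows "Psig \<mu> \<Phi> \<gamma> 0 t ** Psig \<mu> \<Phi> \<gamma> t 0 = mat 1"
proof -
  have "\<Phi> 0 t ** \<Phi> t 0 = mat 1" using cocycle[OF Ac ev, of 0 t 0] ev unfolding evol_op_def by simp
  moreover have "(1 / \<mu> t) powr (- \<gamma>) * \<mu> t powr (- \<gamma>) = 1"
    using gr_pos[OF gr, of t] by (simp add: powr_divide powr_minus)
  ultimately show ?thesis unfolding Psig_def gr_0[OF gr] sc_l sc_r by (simp add: mult.commute)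
qed

lemma UF_char:
  fixes A :: "real \<Rightarrow> real^'n^'n"
  assumes Ac: "continuous_on UNIV A" and ev: "evol_op A \<Phi>" and mu: "diff_growth_rate \<mu>"
    and D: "Dich \<mu> \<Phi> \<gamma> P K \<alpha> \<beta> \<theta> \<nu>"
  shows "UF \<mu> \<Phi> \<gamma> = {\<xi>. P 0 *v \<xi> = \<xi>}"
proof -
  have gr: "growth_rate \<mu>" using mu unfolding diff_growth_rate_def by auto
  have idem: "P t ** P t = P t" for t using D unfolding Dich_def by auto
  have comm: "P t ** Psig \<mu> \<Phi> \<gamma> t s = Psig \<mu> \<Phi> \<gamma> t s ** P s" for t s
    using D unfolding Dich_def by (simp add: comm_Psig[OF gr])
  have K1: "K \<ge> 1" and al: "\<alpha> < 0" and be: "\<beta> - \<nu> > 0" using D unfolding Dich_def by auto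
  have Pb: "mnorm (Psig \<mu> \<Phi> \<gamma> t 0 ** P 0) \<le> K * \<mu> t powr \<alpha>" if "0 \<le> t" for t
  proof -
    have "mnorm (Psig \<mu> \<Phi> \<gamma> t 0 ** P 0) \<le> K * (\<mu> t / \<mu> 0) powr \<alpha> * \<mu> 0 powr (sgn 0 * \<theta>)"
      using D that unfolding Dich_def Pbd_def by blast
    then show ?thesis by (simp add: gr_0[OF gr])
  qed
  have Qb: "mnorm (Psig \<mu> \<Phi> \<gamma> 0 t ** (mat 1 - P t)) \<le> K * \<mu> t powr (\<nu> - \<beta>)" if "0 < t" for t
  proof -
    have "mnorm (Psig \<mu> \<Phi> \<gamma> 0 t ** (mat 1 - P t)) \<le> K * (\<mu> 0 / \<mu> t) powr \<beta> * \<mu> t powr (sgn t * \<nu>)"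
      using D less_imp_le[OF that] unfolding Dich_def Qbd_def by blast
    then have "mnorm (Psig \<mu> \<Phi> \<gamma> 0 t ** (mat 1 - P t)) \<le> K * (1 / \<mu> t) powr \<beta> * \<mu> t powr (sgn t * \<nu>)"
      by (simp add: gr_0[OF gr])
    also have "\<dots> = K * \<mu> t powr (\<nu> - \<beta>)"
      using that gr_pos[OF gr, of t] by (simp add: powr_divide powr_minus powr_diff field_simps)
    finally show ?thesis .
  qed
  have bnd: "norm (\<Phi> t 0 *v \<xi>) * \<mu> t powr (- \<gamma>) \<le> K * norm \<xi>" if "0 \<le> t" "P 0 *v \<xi> = \<xi>" for t \<xi>
  proof -
    have "norm (\<Phi> t 0 *v \<xi>) * \<mu> t powr (- \<gamma>) = norm ((Psig \<mu> \<Phi> \<gamma> t 0 ** P 0) *v \<xi>)"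
      using Psig_norm[OF gr] that(2) by (metis matrix_vector_mul_assoc)
    also have "\<dots> \<le> mnorm (Psig \<mu> \<Phi> \<gamma> t 0 ** P 0) * norm \<xi>" by (rule mnorm_mv)
    also have "\<dots> \<le> K * \<mu> t powr \<alpha> * norm \<xi>" by (rule mult_right_mono[OF Pb[OF that(1)]]) simp
    also have "\<dots> \<le> K * 1 * norm \<xi>"
    proof -
      have "\<mu> t powr \<alpha> \<le> \<mu> t powr 0" using powr_mono[of \<alpha> 0 "\<mu> t"] al gr_ge1[OF gr that(1)] by simp
      then have "\<mu> t powr \<alpha> \<le> 1" using gr_pos[OF gr, of t] by simp
      then show ?thesis using K1 by (intro mult_right_mono mult_left_mono) auto
    qed
    finally show ?thesis by simp
  qed
  show ?thesis
  proof (intro equalityI subsetI)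
    fix \<xi> assume "\<xi> \<in> {\<xi>. P 0 *v \<xi> = \<xi>}"
    then have x: "P 0 *v \<xi> = \<xi>" by simp
    show "\<xi> \<in> UF \<mu> \<Phi> \<gamma>" unfolding UF_def Uset_def
      using bnd[OF _ x] by (auto intro!: bdd_aboveI2[where M = "K * norm \<xi>"])
  next
    fix \<xi> assume "\<xi> \<in> UF \<mu> \<Phi> \<gamma>"
    then obtain B where B: "\<And>t. 0 \<le> t \<Longrightarrow> norm (\<Phi> t 0 *v \<xi>) * \<mu> t powr (- \<gamma>) \<le> B"
      unfolding UF_def Uset_def bdd_above_def by auto
    define \<eta> where "\<eta> = \<xi> - P 0 *v \<xi>"
    have P0eta: "P 0 *v \<eta> = 0" unfolding \<eta>_def
      by (simp add: matrix_vector_mult_diff_distrib matrix_vector_mul_assoc idem)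
    define B' where "B' = B + K * norm (P 0 *v \<xi>)"
    have Beta: "norm (Psig \<mu> \<Phi> \<gamma> t 0 *v \<eta>) \<le> B'" if "0 \<le> t" for t
    proof -
      have "norm (Psig \<mu> \<Phi> \<gamma> t 0 *v \<eta>) \<le> norm (Psig \<mu> \<Phi> \<gamma> t 0 *v \<xi>) + norm (Psig \<mu> \<Phi> \<gamma> t 0 *v (P 0 *v \<xi>))"
        unfolding \<eta>_def matrix_vector_mult_diff_distrib by (rule norm_triangle_ineq4)
      moreover have "norm (Psig \<mu> \<Phi> \<gamma> t 0 *v \<xi>) \<le> B" using B[OF that] Psig_norm[OF gr, of \<Phi> \<gamma> t \<xi>] by simp
      moreover have "norm (Psig \<mu> \<Phi> \<gamma> t 0 *v (P 0 *v \<xi>)) \<le> K * norm (P 0 *v \<xi>)"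
        using bnd[OF that, of "P 0 *v \<xi>"] Psig_norm[OF gr, of \<Phi> \<gamma> t "P 0 *v \<xi>"]
        by (simp add: matrix_vector_mul_assoc idem)
      ultimately show ?thesis unfolding B'_def by linarith
    qed
    have key: "norm \<eta> \<le> K * \<mu> t powr (\<nu> - \<beta>) * B'" if "0 < t" for t
    proof -
      have "(Psig \<mu> \<Phi> \<gamma> 0 t ** (mat 1 - P t)) *v (Psig \<mu> \<Phi> \<gamma> t 0 *v \<eta>) = \<eta>"
      proof -
        have "P t *v (Psig \<mu> \<Phi> \<gamma> t 0 *v \<eta>) = 0"
          using comm_vec[OF comm[of t 0], of \<eta>] P0eta by simp
        then have "(Psig \<mu> \<Phi> \<gamma> 0 t ** (mat 1 - P t)) *v (Psig \<mu> \<Phi> \<gamma> t 0 *v \<eta>)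
            = Psig \<mu> \<Phi> \<gamma> 0 t *v (Psig \<mu> \<Phi> \<gamma> t 0 *v \<eta>)"
          by (simp add: matrix_vector_mul_assoc[symmetric] matrix_vector_mult_diff_rdistrib)
        also have "\<dots> = \<eta>" by (simp add: matrix_vector_mul_assoc Psig_inv[OF Ac ev gr])
        finally show ?thesis .
      qed
      then have "norm \<eta> \<le> mnorm (Psig \<mu> \<Phi> \<gamma> 0 t ** (mat 1 - P t)) * norm (Psig \<mu> \<Phi> \<gamma> t 0 *v \<eta>)"
        by (metis mnorm_mv)
      also have "\<dots> \<le> (K * \<mu> t powr (\<nu> - \<beta>)) * B'"
        using that K1 by (intro mult_mono Qb Beta mnorm_nn) auto
      finally show ?thesis by simp
    qed
    have lim: "((\<lambda>t. K * \<mu> t powr (\<nu> - \<beta>) * B') \<longlongrightarrow> 0) at_top"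
    proof -
      have "((\<lambda>t. \<mu> t powr (\<nu> - \<beta>)) \<longlongrightarrow> 0) at_top"
        using be gr unfolding growth_rate_def by (intro tendsto_neg_powr) auto
      then show ?thesis by (auto intro: tendsto_mult_left_zero tendsto_mult_right_zero)
    qed
    have ev0: "\<forall>\<^sub>F t in at_top. norm \<eta> \<le> K * \<mu> t powr (\<nu> - \<beta>) * B'"
      using eventually_gt_at_top[of "0::real"] by (rule eventually_mono) (rule key)
    have "norm \<eta> \<le> 0"
      by (rule tendsto_le[OF trivial_limit_at_top_linorder lim tendsto_const ev0])
    then have "\<eta> = 0" by simp
    then show "\<xi> \<in> {\<xi>. P 0 *v \<xi> = \<xi>}" unfolding \<eta>_def by simp
  qed
qed


lemma VF_char:
  fixes A :: "real \<Rightarrow> real^'n^'n"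
  assumes Ac: "continuous_on UNIV A" and ev: "evol_op A \<Phi>" and mu: "diff_growth_rate \<mu>"
    and D: "Dich \<mu> \<Phi> \<gamma> P K \<alpha> \<beta> \<theta> \<nu>"
  shows "VF \<mu> \<Phi> \<gamma> = {\<xi>. P 0 *v \<xi> = 0}"
proof -
  have gr: "growth_rate \<mu>" using mu unfolding diff_growth_rate_def by auto
  have idem: "P t ** P t = P t" for t using D unfolding Dich_def by auto
  have comm: "P t ** Psig \<mu> \<Phi> \<gamma> t s = Psig \<mu> \<Phi> \<gamma> t s ** P s" for t s
    using D unfolding Dich_def by (simp add: comm_Psig[OF gr])
  have K1: "K \<ge> 1" and be: "\<beta> > 0" and al: "\<alpha> + \<theta> < 0" using D unfolding Dich_def by auto
  have Qb: "mnorm (Psig \<mu> \<Phi> \<gamma> t 0 ** (mat 1 - P 0)) \<le> K * \<mu> t powr \<beta>" if "t \<le> 0" for t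
  proof -
    have "mnorm (Psig \<mu> \<Phi> \<gamma> t 0 ** (mat 1 - P 0)) \<le> K * (\<mu> t / \<mu> 0) powr \<beta> * \<mu> 0 powr (sgn 0 * \<nu>)"
      using D that unfolding Dich_def Qbd_def by blast
    then show ?thesis by (simp add: gr_0[OF gr])
  qed
  have Pb: "mnorm (Psig \<mu> \<Phi> \<gamma> 0 t ** P t) \<le> K * \<mu> t powr (- \<alpha> - \<theta>)" if "t < 0" for t
  proof -
    have "mnorm (Psig \<mu> \<Phi> \<gamma> 0 t ** P t) \<le> K * (\<mu> 0 / \<mu> t) powr \<alpha> * \<mu> t powr (sgn t * \<theta>)"
      using D less_imp_le[OF that] unfolding Dich_def Pbd_def by blast
    then have "mnorm (Psig \<mu> \<Phi> \<gamma> 0 t ** P t) \<le> K * (1 / \<mu> t) powr \<alpha> * \<mu> t powr (- \<theta>)"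
      using that by (simp add: gr_0[OF gr])
    also have "\<dots> = K * \<mu> t powr (- \<alpha> - \<theta>)"
      using that gr_pos[OF gr, of t] by (simp add: powr_divide powr_minus powr_diff field_simps)
    finally show ?thesis .
  qed
  have bnd: "norm (\<Phi> t 0 *v \<xi>) * \<mu> t powr (- \<gamma>) \<le> K * norm \<xi>" if "t \<le> 0" "P 0 *v \<xi> = 0" for t \<xi>
  proof -
    have "(mat 1 - P 0) *v \<xi> = \<xi>" using that(2) by (simp add: matrix_vector_mult_diff_rdistrib)
    then have "norm (\<Phi> t 0 *v \<xi>) * \<mu> t powr (- \<gamma>) = norm ((Psig \<mu> \<Phi> \<gamma> t 0 ** (mat 1 - P 0)) *v \<xi>)"
      using Psig_norm[OF gr] by (metis matrix_vector_mul_assoc)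
    also have "\<dots> \<le> mnorm (Psig \<mu> \<Phi> \<gamma> t 0 ** (mat 1 - P 0)) * norm \<xi>" by (rule mnorm_mv)
    also have "\<dots> \<le> K * \<mu> t powr \<beta> * norm \<xi>" by (rule mult_right_mono[OF Qb[OF that(1)]]) simp
    also have "\<dots> \<le> K * 1 * norm \<xi>"
    proof -
      have "\<mu> t powr \<beta> \<le> 1 powr \<beta>" using powr_mono2[of \<beta> "\<mu> t" 1] be gr_le1[OF gr that(1)] gr_pos[OF gr, of t] by simp
      then have "\<mu> t powr \<beta> \<le> 1" by simp
      then show ?thesis using K1 by (intro mult_right_mono mult_left_mono) auto
    qed
    finally show ?thesis by simp
  qed
  show ?thesis
  proof (intro equalityI subsetI)
    fix \<xi> assume "\<xi> \<in> {\<xi>. P 0 *v \<xi> = 0}"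
    then have x: "P 0 *v \<xi> = 0" by simp
    show "\<xi> \<in> VF \<mu> \<Phi> \<gamma>" unfolding VF_def Vset_def
      using bnd[OF _ x] by (auto intro!: bdd_aboveI2[where M = "K * norm \<xi>"])
  next
    fix \<xi> assume "\<xi> \<in> VF \<mu> \<Phi> \<gamma>"
    then obtain B where B: "\<And>t. t \<le> 0 \<Longrightarrow> norm (\<Phi> t 0 *v \<xi>) * \<mu> t powr (- \<gamma>) \<le> B"
      unfolding VF_def Vset_def bdd_above_def by auto
    define \<eta> where "\<eta> = P 0 *v \<xi>"
    define \<zeta> where "\<zeta> = \<xi> - P 0 *v \<xi>"
    have P0eta: "P 0 *v \<eta> = \<eta>" unfolding \<eta>_def
      by (simp add: matrix_vector_mul_assoc idem)
    have P0z: "P 0 *v \<zeta> = 0" unfolding \<zeta>_def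
      by (simp add: matrix_vector_mult_diff_distrib matrix_vector_mul_assoc idem)
    define B' where "B' = B + K * norm \<zeta>"
    have Beta: "norm (Psig \<mu> \<Phi> \<gamma> t 0 *v \<eta>) \<le> B'" if "t \<le> 0" for t
    proof -
      have e: "\<eta> = \<xi> - \<zeta>" unfolding \<eta>_def \<zeta>_def by simp
      have "norm (Psig \<mu> \<Phi> \<gamma> t 0 *v \<eta>) \<le> norm (Psig \<mu> \<Phi> \<gamma> t 0 *v \<xi>) + norm (Psig \<mu> \<Phi> \<gamma> t 0 *v \<zeta>)"
        unfolding e matrix_vector_mult_diff_distrib by (rule norm_triangle_ineq4)
      moreover have "norm (Psig \<mu> \<Phi> \<gamma> t 0 *v \<xi>) \<le> B" using B[OF that] Psig_norm[OF gr, of \<Phi> \<gamma> t \<xi>] by simp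
      moreover have "norm (Psig \<mu> \<Phi> \<gamma> t 0 *v \<zeta>) \<le> K * norm \<zeta>"
        using bnd[OF that P0z] Psig_norm[OF gr, of \<Phi> \<gamma> t \<zeta>] by simp
      ultimately show ?thesis unfolding B'_def by linarith
    qed
    have key: "norm \<eta> \<le> K * \<mu> t powr (- \<alpha> - \<theta>) * B'" if "t < 0" for t
    proof -
      have "(Psig \<mu> \<Phi> \<gamma> 0 t ** P t) *v (Psig \<mu> \<Phi> \<gamma> t 0 *v \<eta>) = \<eta>"
      proof -
        have "P t *v (Psig \<mu> \<Phi> \<gamma> t 0 *v \<eta>) = Psig \<mu> \<Phi> \<gamma> t 0 *v \<eta>"
          using comm_vec[OF comm[of t 0], of \<eta>] P0eta by simp
        then have "(Psig \<mu> \<Phi> \<gamma> 0 t ** P t) *v (Psig \<mu> \<Phi> \<gamma> t 0 *v \<eta>)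
            = Psig \<mu> \<Phi> \<gamma> 0 t *v (Psig \<mu> \<Phi> \<gamma> t 0 *v \<eta>)"
          by (simp add: matrix_vector_mul_assoc[symmetric])
        also have "\<dots> = \<eta>" by (simp add: matrix_vector_mul_assoc Psig_inv[OF Ac ev gr])
        finally show ?thesis .
      qed
      then have "norm \<eta> \<le> mnorm (Psig \<mu> \<Phi> \<gamma> 0 t ** P t) * norm (Psig \<mu> \<Phi> \<gamma> t 0 *v \<eta>)"
        by (metis mnorm_mv)
      also have "\<dots> \<le> (K * \<mu> t powr (- \<alpha> - \<theta>)) * B'"
        using that K1 by (intro mult_mono Pb Beta mnorm_nn) auto
      finally show ?thesis by simp
    qed
    have lim: "((\<lambda>t. K * \<mu> t powr (- \<alpha> - \<theta>) * B') \<longlongrightarrow> 0) at_bot"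
    proof -
      have "((\<lambda>t. \<mu> t powr (- \<alpha> - \<theta>)) \<longlongrightarrow> 0) at_bot"
        using al gr gr_pos[OF gr] unfolding growth_rate_def
        by (intro tendsto_zero_powrI) (auto intro: less_imp_le always_eventually)
      then show ?thesis by (auto intro: tendsto_mult_left_zero tendsto_mult_right_zero)
    qed
    have ev0: "\<forall>\<^sub>F t in at_bot. norm \<eta> \<le> K * \<mu> t powr (- \<alpha> - \<theta>) * B'"
      using eventually_gt_at_bot[of "0::real"] by (rule eventually_mono) (rule key)
    have "norm \<eta> \<le> 0"
      by (rule tendsto_le[OF trivial_limit_at_bot_linorder lim tendsto_const ev0])
    then have "\<eta> = 0" by simp
    then show "\<xi> \<in> {\<xi>. P 0 *v \<xi> = 0}" unfolding \<eta>_def by simp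
  qed
qed



lemma sub_fix: "subspace {\<xi>::real^'n. p *v \<xi> = \<xi>}"
  unfolding subspace_def by (auto simp: matrix_vector_right_distrib matrix_vector_mult_scaleR)

lemma sub_ker: "subspace {\<xi>::real^'n. p *v \<xi> = 0}"
  unfolding subspace_def by (auto simp: matrix_vector_right_distrib matrix_vector_mult_scaleR)

lemma proj_dim:
  fixes p :: "real^'n^'n"
  assumes idem: "p ** p = p"
  shows "dim {\<xi>. p *v \<xi> = \<xi>} + dim {\<xi>. p *v \<xi> = 0} = dim (UNIV::(real^'n) set)"
proof -
  have pp: "p *v (p *v x) = p *v x" for x using idem by (simp add: matrix_vector_mul_assoc)
  have "{x + y |x y. x \<in> {\<xi>. p *v \<xi> = \<xi>} \<and> y \<in> {\<xi>. p *v \<xi> = 0}} = UNIV"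
  proof (intro set_eqI iffI)
    fix z :: "real^'n"
    show "z \<in> {x + y |x y. x \<in> {\<xi>. p *v \<xi> = \<xi>} \<and> y \<in> {\<xi>. p *v \<xi> = 0}}"
      by (rule CollectI, rule exI[of _ "p *v z"], rule exI[of _ "z - p *v z"])
         (simp add: pp matrix_vector_mult_diff_distrib)
  qed simp
  moreover have "dim ({\<xi>. p *v \<xi> = \<xi>} \<inter> {\<xi>. p *v \<xi> = 0}) = 0"
    by (subst dim_eq_0) auto
  ultimately show ?thesis using dim_sums_Int[OF sub_fix sub_ker, of p p] by (simp del: dim_eq_0)
qed

lemma proj_eq:
  fixes p q :: "real^'n^'n"
  assumes "p ** p = p" "q ** q = q"
    and "{\<xi>. p *v \<xi> = \<xi>} = {\<xi>. q *v \<xi> = \<xi>}" "{\<xi>. p *v \<xi> = 0} = {\<xi>. q *v \<xi> = 0}"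
  shows "p = q"
proof -
  have pp: "p *v (p *v x) = p *v x" for x using assms(1) by (simp add: matrix_vector_mul_assoc)
  have qq: "q *v (q *v x) = q *v x" for x using assms(2) by (simp add: matrix_vector_mul_assoc)
  have "p *v x = q *v x" for x
  proof -
    have a: "p *v (q *v x) = q *v x" using assms(3) qq by blast
    have "q *v (x - q *v x) = 0" by (simp add: qq matrix_vector_mult_diff_distrib)
    then have b: "p *v (x - q *v x) = 0" using assms(4) by blast
    have "p *v x = p *v (q *v x) + p *v (x - q *v x)"
      by (simp add: matrix_vector_mult_diff_distrib)
    then show ?thesis using a b by simp
  qed
  then show ?thesis by (simp add: matrix_eq)
qed

lemma P_transport:
  fixes A :: "real \<Rightarrow> real^'n^'n"
  assumes Ac: "continuous_on UNIV A" and ev: "evol_op A \<Phi>"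
    and comm: "\<And>t s. P t ** \<Phi> t s = \<Phi> t s ** P s"
  shows "P t = \<Phi> t 0 ** P 0 ** \<Phi> 0 t"
proof -
  have "\<Phi> t 0 ** \<Phi> 0 t = mat 1" using cocycle[OF Ac ev, of t 0 t] ev unfolding evol_op_def by simp
  then have "P t = P t ** \<Phi> t 0 ** \<Phi> 0 t" by (simp add: matrix_mul_assoc[symmetric])
  then show ?thesis using comm[of t 0] by simp
qed

lemma UF_mono:
  assumes gr: "growth_rate \<mu>" and le: "\<gamma>1 \<le> \<gamma>2"
  shows "UF \<mu> \<Phi> \<gamma>1 \<subseteq> UF \<mu> \<Phi> \<gamma>2"
proof
  fix \<xi> assume "\<xi> \<in> UF \<mu> \<Phi> \<gamma>1"
  then obtain B where B: "\<And>t. 0 \<le> t \<Longrightarrow> norm (\<Phi> t 0 *v \<xi>) * \<mu> t powr (- \<gamma>1) \<le> B"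
    unfolding UF_def Uset_def bdd_above_def by auto
  have "norm (\<Phi> t 0 *v \<xi>) * \<mu> t powr (- \<gamma>2) \<le> B" if "0 \<le> t" for t
  proof -
    have "\<mu> t powr (- \<gamma>2) \<le> \<mu> t powr (- \<gamma>1)" using powr_mono[of "-\<gamma>2" "-\<gamma>1" "\<mu> t"] le gr_ge1[OF gr that] by simp
    then have "norm (\<Phi> t 0 *v \<xi>) * \<mu> t powr (- \<gamma>2) \<le> norm (\<Phi> t 0 *v \<xi>) * \<mu> t powr (- \<gamma>1)"
      by (rule mult_left_mono) simp
    then show ?thesis using B[OF that] by linarith
  qed
  then show "\<xi> \<in> UF \<mu> \<Phi> \<gamma>2" unfolding UF_def Uset_def by (auto intro!: bdd_aboveI2[where M = B])
qed

lemma VF_mono: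
  assumes gr: "growth_rate \<mu>" and le: "\<gamma>1 \<le> \<gamma>2"
  shows "VF \<mu> \<Phi> \<gamma>2 \<subseteq> VF \<mu> \<Phi> \<gamma>1"
proof
  fix \<xi> assume "\<xi> \<in> VF \<mu> \<Phi> \<gamma>2"
  then obtain B where B: "\<And>t. t \<le> 0 \<Longrightarrow> norm (\<Phi> t 0 *v \<xi>) * \<mu> t powr (- \<gamma>2) \<le> B"
    unfolding VF_def Vset_def bdd_above_def by auto
  have "norm (\<Phi> t 0 *v \<xi>) * \<mu> t powr (- \<gamma>1) \<le> B" if "t \<le> 0" for t
  proof -
    have "\<mu> t powr (- \<gamma>1) \<le> \<mu> t powr (- \<gamma>2)"
      using powr_mono'[of "-\<gamma>2" "-\<gamma>1" "\<mu> t"] le gr_le1[OF gr that] gr_pos[OF gr, of t] by simp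
    then have "norm (\<Phi> t 0 *v \<xi>) * \<mu> t powr (- \<gamma>1) \<le> norm (\<Phi> t 0 *v \<xi>) * \<mu> t powr (- \<gamma>2)"
      by (rule mult_left_mono) simp
    then show ?thesis using B[OF that] by linarith
  qed
  then show "\<xi> \<in> VF \<mu> \<Phi> \<gamma>1" unfolding VF_def Vset_def by (auto intro!: bdd_aboveI2[where M = B])
qed

lemma U_pair:
  fixes A :: "real \<Rightarrow> real^'n^'n"
  assumes Ac: "continuous_on UNIV A" and ev: "evol_op A \<Phi>"
  shows "(s, \<xi>) \<in> Uset \<mu> \<Phi> \<gamma> \<longleftrightarrow> \<Phi> 0 s *v \<xi> \<in> UF \<mu> \<Phi> \<gamma>"
  unfolding UF_def Uset_def using cocycle[OF Ac ev, of _ 0 s] by (simp add: matrix_vector_mul_assoc)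

lemma V_pair:
  fixes A :: "real \<Rightarrow> real^'n^'n"
  assumes Ac: "continuous_on UNIV A" and ev: "evol_op A \<Phi>"
  shows "(s, \<xi>) \<in> Vset \<mu> \<Phi> \<gamma> \<longleftrightarrow> \<Phi> 0 s *v \<xi> \<in> VF \<mu> \<Phi> \<gamma>"
  unfolding VF_def Vset_def using cocycle[OF Ac ev, of _ 0 s] by (simp add: matrix_vector_mul_assoc)

lemma Phi_inj:
  fixes A :: "real \<Rightarrow> real^'n^'n"
  assumes Ac: "continuous_on UNIV A" and ev: "evol_op A \<Phi>"
  shows "\<Phi> 0 s *v \<xi> = 0 \<longleftrightarrow> \<xi> = 0"
proof
  assume "\<Phi> 0 s *v \<xi> = 0"
  then have "\<Phi> s 0 *v (\<Phi> 0 s *v \<xi>) = 0" by simp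
  moreover have "\<Phi> s 0 ** \<Phi> 0 s = mat 1" using cocycle[OF Ac ev, of s 0 s] ev unfolding evol_op_def by simp
  ultimately show "\<xi> = 0" by (simp add: matrix_vector_mul_assoc)
qed simp

lemma Dich_local:
  assumes gr: "growth_rate \<mu>" and D: "Dich \<mu> \<Phi> \<gamma> P K \<alpha> \<beta> \<theta> \<nu>"
    and near: "\<bar>\<gamma>' - \<gamma>\<bar> < min (- (\<alpha> + \<theta>)) (\<beta> - \<nu>)"
  shows "Dich \<mu> \<Phi> \<gamma>' P K (\<alpha> + \<gamma> - \<gamma>') (\<beta> + \<gamma> - \<gamma>') \<theta> \<nu>"
  using D near Pbd_shift[OF gr, of \<Phi> \<gamma> P K \<alpha> \<theta> \<gamma>'] Qbd_shift[OF gr, of \<Phi> \<gamma> P K \<beta> \<nu> \<gamma>']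
  unfolding Dich_def by (auto simp: abs_less_iff)



theorem mainTheorem6:
  fixes A :: "real \<Rightarrow> real^'n^'n" and \<Phi> :: "real \<Rightarrow> real \<Rightarrow> real^'n^'n"
    and \<mu> :: "real \<Rightarrow> real" and \<gamma>1 \<gamma>2 :: real
  assumes "continuous_on UNIV A" and "evol_op A \<Phi>"
    and "diff_growth_rate \<mu>"
    and "\<gamma>1 \<in> rhoND \<mu> A" and "\<gamma>2 \<in> rhoND \<mu> A" and "\<gamma>1 < \<gamma>2"
  shows "(Uset \<mu> \<Phi> \<gamma>2 \<inter> Vset \<mu> \<Phi> \<gamma>1 \<noteq> UNIV \<times> {0}
            \<longleftrightarrow> {\<gamma>1..\<gamma>2} \<inter> SigmaND \<mu> A \<noteq> {})
       \<and> ({\<gamma>1..\<gamma>2} \<inter> SigmaND \<mu> A \<noteq> {}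
            \<longleftrightarrow> rank_im (Uset \<mu> \<Phi> \<gamma>1) < rank_im (Uset \<mu> \<Phi> \<gamma>2))
       \<and> (rank_im (Uset \<mu> \<Phi> \<gamma>1) < rank_im (Uset \<mu> \<Phi> \<gamma>2)
            \<longleftrightarrow> rank_im (Vset \<mu> \<Phi> \<gamma>1) > rank_im (Vset \<mu> \<Phi> \<gamma>2))"
proof -
  note Ac = assms(1) and ev = assms(2) and mu = assms(3) and lt = assms(6)
  have gr: "growth_rate \<mu>" using mu unfolding diff_growth_rate_def by auto
  have rho: "\<gamma> \<in> rhoND \<mu> A \<longleftrightarrow> (\<exists>P K \<alpha> \<beta> \<theta> \<nu>. Dich \<mu> \<Phi> \<gamma> P K \<alpha> \<beta> \<theta> \<nu>)" for \<gamma>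
    unfolding rhoND_def SigmaND_def using NmuD_iff[OF Ac ev mu] by simp
  obtain P1 K1 a1 b1 th1 nu1 where D1: "Dich \<mu> \<Phi> \<gamma>1 P1 K1 a1 b1 th1 nu1" using assms(4) rho by blast
  obtain P2 K2 a2 b2 th2 nu2 where D2: "Dich \<mu> \<Phi> \<gamma>2 P2 K2 a2 b2 th2 nu2" using assms(5) rho by blast
  note U1 = UF_char[OF Ac ev mu D1] and V1 = VF_char[OF Ac ev mu D1]
  note U2 = UF_char[OF Ac ev mu D2] and V2 = VF_char[OF Ac ev mu D2]
  have idem1: "P1 t ** P1 t = P1 t" for t using D1 unfolding Dich_def by auto
  have idem2: "P2 t ** P2 t = P2 t" for t using D2 unfolding Dich_def by auto
  have rU: "rank_im (Uset \<mu> \<Phi> \<gamma>) = dim (UF \<mu> \<Phi> \<gamma>)" for \<gamma> unfolding rank_im_def UF_def ..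
  have rV: "rank_im (Vset \<mu> \<Phi> \<gamma>) = dim (VF \<mu> \<Phi> \<gamma>)" for \<gamma> unfolding rank_im_def VF_def ..
  have ds1: "dim (UF \<mu> \<Phi> \<gamma>1) + dim (VF \<mu> \<Phi> \<gamma>1) = dim (UNIV::(real^'n) set)"
    unfolding U1 V1 by (rule proj_dim[OF idem1])
  have ds2: "dim (UF \<mu> \<Phi> \<gamma>2) + dim (VF \<mu> \<Phi> \<gamma>2) = dim (UNIV::(real^'n) set)"
    unfolding U2 V2 by (rule proj_dim[OF idem2])
  have subU: "UF \<mu> \<Phi> \<gamma>1 \<subseteq> UF \<mu> \<Phi> \<gamma>2" by (rule UF_mono[OF gr less_imp_le[OF lt]])
  have subV: "VF \<mu> \<Phi> \<gamma>2 \<subseteq> VF \<mu> \<Phi> \<gamma>1" by (rule VF_mono[OF gr less_imp_le[OF lt]])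
  have leU: "dim (UF \<mu> \<Phi> \<gamma>1) \<le> dim (UF \<mu> \<Phi> \<gamma>2)" by (rule dim_subset[OF subU])
  have leV: "dim (VF \<mu> \<Phi> \<gamma>2) \<le> dim (VF \<mu> \<Phi> \<gamma>1)" by (rule dim_subset[OF subV])
  have sU1: "subspace (UF \<mu> \<Phi> \<gamma>1)" unfolding U1 by (rule sub_fix)
  have sU2: "subspace (UF \<mu> \<Phi> \<gamma>2)" unfolding U2 by (rule sub_fix)
  have sV1: "subspace (VF \<mu> \<Phi> \<gamma>1)" unfolding V1 by (rule sub_ker)
  have sV2: "subspace (VF \<mu> \<Phi> \<gamma>2)" unfolding V2 by (rule sub_ker)
  have eqdim: "UF \<mu> \<Phi> \<gamma>1 = UF \<mu> \<Phi> \<gamma>2 \<and> VF \<mu> \<Phi> \<gamma>1 = VF \<mu> \<Phi> \<gamma>2"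
    if "dim (UF \<mu> \<Phi> \<gamma>1) = dim (UF \<mu> \<Phi> \<gamma>2)"
  proof
    show "UF \<mu> \<Phi> \<gamma>1 = UF \<mu> \<Phi> \<gamma>2" using subspace_dim_equal[OF sU1 sU2 subU] that by simp
    have "dim (VF \<mu> \<Phi> \<gamma>1) \<le> dim (VF \<mu> \<Phi> \<gamma>2)" using ds1 ds2 that by linarith
    then show "VF \<mu> \<Phi> \<gamma>1 = VF \<mu> \<Phi> \<gamma>2" using subspace_dim_equal[OF sV2 sV1 subV] by simp
  qed
  have cd: "dim (UF \<mu> \<Phi> \<gamma>1) < dim (UF \<mu> \<Phi> \<gamma>2) \<longleftrightarrow> dim (VF \<mu> \<Phi> \<gamma>2) < dim (VF \<mu> \<Phi> \<gamma>1)"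
    using ds1 ds2 by linarith
  have aiff: "Uset \<mu> \<Phi> \<gamma>2 \<inter> Vset \<mu> \<Phi> \<gamma>1 \<noteq> UNIV \<times> {0} \<longleftrightarrow> (\<exists>\<xi>. \<xi> \<noteq> 0 \<and> \<xi> \<in> UF \<mu> \<Phi> \<gamma>2 \<and> \<xi> \<in> VF \<mu> \<Phi> \<gamma>1)"
  proof
    assume "Uset \<mu> \<Phi> \<gamma>2 \<inter> Vset \<mu> \<Phi> \<gamma>1 \<noteq> UNIV \<times> {0}"
    moreover have "UNIV \<times> {0} \<subseteq> Uset \<mu> \<Phi> \<gamma>2 \<inter> Vset \<mu> \<Phi> \<gamma>1"
      unfolding Uset_def Vset_def by (auto intro!: bdd_aboveI2[where M=0])
    ultimately obtain s \<xi> where "(s, \<xi>) \<in> Uset \<mu> \<Phi> \<gamma>2" "(s, \<xi>) \<in> Vset \<mu> \<Phi> \<gamma>1" "\<xi> \<noteq> 0"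
      by auto
    then have "\<Phi> 0 s *v \<xi> \<noteq> 0" "\<Phi> 0 s *v \<xi> \<in> UF \<mu> \<Phi> \<gamma>2" "\<Phi> 0 s *v \<xi> \<in> VF \<mu> \<Phi> \<gamma>1"
      using U_pair[OF Ac ev, of s \<xi> \<mu> \<gamma>2] V_pair[OF Ac ev, of s \<xi> \<mu> \<gamma>1] Phi_inj[OF Ac ev, of s \<xi>] by simp_all
    then show "\<exists>\<xi>. \<xi> \<noteq> 0 \<and> \<xi> \<in> UF \<mu> \<Phi> \<gamma>2 \<and> \<xi> \<in> VF \<mu> \<Phi> \<gamma>1" by blast
  next
    assume "\<exists>\<xi>. \<xi> \<noteq> 0 \<and> \<xi> \<in> UF \<mu> \<Phi> \<gamma>2 \<and> \<xi> \<in> VF \<mu> \<Phi> \<gamma>1"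
    then obtain \<xi> where "\<xi> \<noteq> 0" "(0, \<xi>) \<in> Uset \<mu> \<Phi> \<gamma>2 \<inter> Vset \<mu> \<Phi> \<gamma>1"
      unfolding UF_def VF_def by auto
    then show "Uset \<mu> \<Phi> \<gamma>2 \<inter> Vset \<mu> \<Phi> \<gamma>1 \<noteq> UNIV \<times> {0}" by auto
  qed
  have a_c: "(\<exists>\<xi>. \<xi> \<noteq> 0 \<and> \<xi> \<in> UF \<mu> \<Phi> \<gamma>2 \<and> \<xi> \<in> VF \<mu> \<Phi> \<gamma>1) \<longleftrightarrow> dim (UF \<mu> \<Phi> \<gamma>1) < dim (UF \<mu> \<Phi> \<gamma>2)"
  proof
    assume "\<exists>\<xi>. \<xi> \<noteq> 0 \<and> \<xi> \<in> UF \<mu> \<Phi> \<gamma>2 \<and> \<xi> \<in> VF \<mu> \<Phi> \<gamma>1"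
    then obtain \<xi> where x: "\<xi> \<noteq> 0" "\<xi> \<in> UF \<mu> \<Phi> \<gamma>2" "\<xi> \<in> VF \<mu> \<Phi> \<gamma>1" by blast
    show "dim (UF \<mu> \<Phi> \<gamma>1) < dim (UF \<mu> \<Phi> \<gamma>2)"
    proof (rule ccontr)
      assume "\<not> ?thesis"
      then have "UF \<mu> \<Phi> \<gamma>1 = UF \<mu> \<Phi> \<gamma>2" using eqdim leU by simp
      then have "\<xi> \<in> UF \<mu> \<Phi> \<gamma>1" using x by simp
      then show False using x V1 U1 by auto
    qed
  next
    assume less: "dim (UF \<mu> \<Phi> \<gamma>1) < dim (UF \<mu> \<Phi> \<gamma>2)"
    have "dim {x + y |x y. x \<in> UF \<mu> \<Phi> \<gamma>2 \<and> y \<in> VF \<mu> \<Phi> \<gamma>1} + dim (UF \<mu> \<Phi> \<gamma>2 \<inter> VF \<mu> \<Phi> \<gamma>1)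
        = dim (UF \<mu> \<Phi> \<gamma>2) + dim (VF \<mu> \<Phi> \<gamma>1)" by (rule dim_sums_Int[OF sU2 sV1])
    moreover have "dim {x + y |x y. x \<in> UF \<mu> \<Phi> \<gamma>2 \<and> y \<in> VF \<mu> \<Phi> \<gamma>1} \<le> dim (UNIV::(real^'n) set)"
      by (rule dim_subset) simp
    ultimately have "dim (UF \<mu> \<Phi> \<gamma>2 \<inter> VF \<mu> \<Phi> \<gamma>1) \<noteq> 0" using less ds1 by linarith
    then show "\<exists>\<xi>. \<xi> \<noteq> 0 \<and> \<xi> \<in> UF \<mu> \<Phi> \<gamma>2 \<and> \<xi> \<in> VF \<mu> \<Phi> \<gamma>1"
      by (auto simp del: dim_UNIV)
  qed
  have b_c: "dim (UF \<mu> \<Phi> \<gamma>1) < dim (UF \<mu> \<Phi> \<gamma>2)" if b: "{\<gamma>1..\<gamma>2} \<inter> SigmaND \<mu> A \<noteq> {}"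
  proof (rule ccontr)
    assume "\<not> ?thesis"
    then have eqs: "UF \<mu> \<Phi> \<gamma>1 = UF \<mu> \<Phi> \<gamma>2 \<and> VF \<mu> \<Phi> \<gamma>1 = VF \<mu> \<Phi> \<gamma>2" using eqdim leU by simp
    have P0: "P1 0 = P2 0" using proj_eq[OF idem1 idem2] eqs U1 U2 V1 V2 by simp
    have comm1: "P1 t ** \<Phi> t s = \<Phi> t s ** P1 s" for t s using D1 unfolding Dich_def by auto
    have comm2: "P2 t ** \<Phi> t s = \<Phi> t s ** P2 s" for t s using D2 unfolding Dich_def by auto
    have PP: "P1 = P2"
    proof (rule ext)
      fix t show "P1 t = P2 t"
        using P_transport[OF Ac ev comm1, of t] P_transport[OF Ac ev comm2, of t] P0 by simp
    qed
    have "\<gamma> \<in> rhoND \<mu> A" if g: "\<gamma>1 \<le> \<gamma>" "\<gamma> \<le> \<gamma>2" for \<gamma>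
    proof -
      have "Dich \<mu> \<Phi> \<gamma> P1 (max K1 K2) (a1 + \<gamma>1 - \<gamma>) (b2 + \<gamma>2 - \<gamma>) th1 nu2"
      proof -
        have "Pbd \<mu> \<Phi> \<gamma> P1 (max K1 K2) (a1 + \<gamma>1 - \<gamma>) th1"
          using Pbd_mono[OF Pbd_shift[OF gr, of \<Phi> \<gamma>1 P1 K1 a1 th1 \<gamma>]] D1 unfolding Dich_def by auto
        moreover have "Qbd \<mu> \<Phi> \<gamma> P1 (max K1 K2) (b2 + \<gamma>2 - \<gamma>) nu2"
          using Qbd_mono[OF Qbd_shift[OF gr, of \<Phi> \<gamma>2 P2 K2 b2 nu2 \<gamma>]] D2 PP unfolding Dich_def by auto
        ultimately show ?thesis using D1 D2 g unfolding Dich_def by auto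
      qed
      then show ?thesis using rho by blast
    qed
    then show False using b unfolding rhoND_def by auto
  qed
  have c_b: "{\<gamma>1..\<gamma>2} \<inter> SigmaND \<mu> A \<noteq> {}" if c: "dim (UF \<mu> \<Phi> \<gamma>1) < dim (UF \<mu> \<Phi> \<gamma>2)"
  proof
    assume none: "{\<gamma>1..\<gamma>2} \<inter> SigmaND \<mu> A = {}"
    define f where "f \<gamma> = real (dim (UF \<mu> \<Phi> \<gamma>))" for \<gamma>
    have cont: "isCont f x" if x: "x \<in> {\<gamma>1..\<gamma>2}" for x
    proof -
      have "x \<in> rhoND \<mu> A" using none x unfolding rhoND_def by auto
      then obtain P K \<alpha> \<beta> \<theta> \<nu> where D: "Dich \<mu> \<Phi> x P K \<alpha> \<beta> \<theta> \<nu>" using rho by blast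
      define e where "e = min (- (\<alpha> + \<theta>)) (\<beta> - \<nu>)"
      have e0: "e > 0" using D unfolding Dich_def e_def by auto
      have "f y = f x" if "dist y x < e" for y
      proof -
        have "\<bar>y - x\<bar> < min (- (\<alpha> + \<theta>)) (\<beta> - \<nu>)" using that unfolding e_def dist_real_def .
        then have "Dich \<mu> \<Phi> y P K (\<alpha> + x - y) (\<beta> + x - y) \<theta> \<nu>"
          by (rule Dich_local[OF gr D])
        then have "UF \<mu> \<Phi> y = UF \<mu> \<Phi> x"
          using UF_char[OF Ac ev mu D] by (simp only: UF_char[OF Ac ev mu])
        then show ?thesis unfolding f_def by simp
      qed
      then have "\<forall>\<^sub>F y in at x. f y = f x" unfolding eventually_at using e0 by blast
      then show ?thesis unfolding isCont_def by (rule tendsto_eventually)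
    qed
    then have "continuous_on {\<gamma>1..\<gamma>2} f" by (intro continuous_at_imp_continuous_on) auto
    moreover have "f \<gamma>1 \<le> f \<gamma>1 + 1/2" "f \<gamma>1 + 1/2 \<le> f \<gamma>2" using c unfolding f_def by auto
    ultimately obtain x where "f x = f \<gamma>1 + 1/2" using IVT'[of f \<gamma>1 "f \<gamma>1 + 1/2" \<gamma>2] lt by auto
    then have "real (dim (UF \<mu> \<Phi> x)) = real (dim (UF \<mu> \<Phi> \<gamma>1)) + 1/2" unfolding f_def .
    moreover have "dim (UF \<mu> \<Phi> x) \<le> dim (UF \<mu> \<Phi> \<gamma>1) \<or> dim (UF \<mu> \<Phi> \<gamma>1) + 1 \<le> dim (UF \<mu> \<Phi> x)" by linarith
    then have "real (dim (UF \<mu> \<Phi> x)) \<le> real (dim (UF \<mu> \<Phi> \<gamma>1)) \<or> real (dim (UF \<mu> \<Phi> \<gamma>1)) + 1 \<le> real (dim (UF \<mu> \<Phi> x))"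
      by (metis of_nat_1 of_nat_add of_nat_le_iff)
    ultimately show False by linarith
  qed
  have X: "{\<gamma>1..\<gamma>2} \<inter> SigmaND \<mu> A \<noteq> {} \<longleftrightarrow> dim (UF \<mu> \<Phi> \<gamma>1) < dim (UF \<mu> \<Phi> \<gamma>2)"
    using b_c c_b by blast
  show ?thesis unfolding rU rV aiff a_c X cd by simp
qed


end
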